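(* Let $d\ge 1$, $0<c\le\infty$, $X=(0,c)$, $X_{\mathrm{SYM}}=(-c,0)\cup(0,c)$ and $\mathbb{X}=X_{\mathrm{SYM}}\times\cdots\times X_{\mathrm{SYM}}$ ($d$ factors). For $i=1,\dots,d$ let $w_i\in C^2(X)$ be strictly positive, let $p_i\in C^2(X)$ be real-valued with $p_i(x)\neq 0$ for all $x\in X$, and let $q_i\in C^1(X)$ be real-valued; extend them to $X_{\mathrm{SYM}}$ by $w_i(-x)=w_i(x)$, $p_i(-x)=p_i(x)$, $q_i(-x)=-q_i(x)$ for $x\in X$. Let $\mu$ be the measure on $\mathbb{X}$ given by $\mu(dx)=w_1(x_1)\cdots w_d(x_d)\,dx$. For $j=1,\dots,d$ and $f\in C^1(\mathbb{X})$ define $$D_jf(x)=p_j(x_j)\frac{\partial f}{\partial x_j}(x)+q_j(x_j)\frac{f(x)+f(\sigma_jx)}{2}+\Big[p_j(x_j)\frac{w_j'(x_j)}{w_j(x_j)}+p_j'(x_j)-q_j(x_j)\Big]\frac{f(x)-f(\sigma_jx)}{2},$$ where $\sigma_j(x_1,\dots,x_j,\dots,x_d)=(x_1,\dots,-x_j,\dots,x_d)$. Then each $D_j$ is skew-symmetric in $L^2(\mathbb{X},\mu)$, in the sense that $$\langle D_jf,g\rangle_{\mu}=-\langle f,D_jg\rangle_{\mu}\qquad\text{for all } f,g\in C^1_c(\mathbb{X}).$$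
   Context: $\langle\cdot,\cdot\rangle_\mu$ denotes the inner product of $L^2(\mathbb{X},\mu)$, $\langle f,g\rangle_\mu=\int_{\mathbb{X}} f\,\overline{g}\,d\mu$. $C^1_c(\mathbb{X})$ denotes $C^1$ functions with compact support in $\mathbb{X}$ (in particular vanishing near the hyperplanes $x_j=0$). *)

theory Defs
  imports "HOL-Analysis.Analysis"
begin

definition Xhalf :: "ereal \<Rightarrow> real set" where
  "Xhalf c = {x. 0 < x \<and> ereal x < c}"

definition Xsym :: "ereal \<Rightarrow> real set" where
  "Xsym c = {x. x \<noteq> 0 \<and> ereal \<bar>x\<bar> < c}"

definition Xprod :: "ereal \<Rightarrow> (real ^ 'n) set" where
  "Xprod c = {x. \<forall>j. x $ j \<in> Xsym c}"

definition C1_on :: "real set \<Rightarrow> (real \<Rightarrow> real) \<Rightarrow> bool" where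
  "C1_on S f \<longleftrightarrow> (\<forall>x\<in>S. f differentiable (at x)) \<and> continuous_on S (deriv f)"

definition C2_on :: "real set \<Rightarrow> (real \<Rightarrow> real) \<Rightarrow> bool" where
  "C2_on S f \<longleftrightarrow> C1_on S f \<and> C1_on S (deriv f)"

definition C1_multi :: "(real ^ 'n) set \<Rightarrow> (real ^ 'n \<Rightarrow> complex) \<Rightarrow> bool" where
  "C1_multi S f \<longleftrightarrow> (\<exists>f'. (\<forall>x\<in>S. (f has_derivative blinfun_apply (f' x)) (at x))
                          \<and> continuous_on S f')"

definition C1c :: "(real ^ 'n) set \<Rightarrow> (real ^ 'n \<Rightarrow> complex) \<Rightarrow> bool" where
  "C1c S f \<longleftrightarrow> C1_multi S f \<and> compact (closure {x. f x \<noteq> 0})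
                 \<and> closure {x. f x \<noteq> 0} \<subseteq> S"

definition partial :: "'n \<Rightarrow> (real ^ 'n \<Rightarrow> complex) \<Rightarrow> real ^ 'n \<Rightarrow> complex" where
  "partial j f x = frechet_derivative f (at x) (axis j 1)"

definition sigma :: "'n \<Rightarrow> real ^ 'n \<Rightarrow> real ^ 'n" where
  "sigma j x = (\<chi> i. if i = j then - (x $ i) else x $ i)"

definition Dop :: "('n \<Rightarrow> real \<Rightarrow> real) \<Rightarrow> ('n \<Rightarrow> real \<Rightarrow> real) \<Rightarrow> ('n \<Rightarrow> real \<Rightarrow> real)
                  \<Rightarrow> 'n \<Rightarrow> (real ^ 'n \<Rightarrow> complex) \<Rightarrow> real ^ 'n \<Rightarrow> complex" where
  "Dop w p q j f x =
     complex_of_real (p j (x $ j)) * partial j f x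
   + complex_of_real (q j (x $ j)) * ((f x + f (sigma j x)) / 2)
   + complex_of_real (p j (x $ j) * deriv (w j) (x $ j) / w j (x $ j)
                      + deriv (p j) (x $ j) - q j (x $ j)) * ((f x - f (sigma j x)) / 2)"

definition mu :: "ereal \<Rightarrow> ('n \<Rightarrow> real \<Rightarrow> real) \<Rightarrow> (real ^ 'n) measure" where
  "mu c w = density lborel (\<lambda>x. indicator (Xprod c) x * ennreal (\<Prod>j\<in>UNIV. w j (x $ j)))"

definition inner_mu :: "ereal \<Rightarrow> ('n \<Rightarrow> real \<Rightarrow> real) \<Rightarrow> (real ^ 'n \<Rightarrow> complex)
                       \<Rightarrow> (real ^ 'n \<Rightarrow> complex) \<Rightarrow> complex" where
  "inner_mu c w f g = (LINT x|mu c w. f x * cnj (g x))"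

end

theory Submission
  imports Defs
begin



lemma open_Xhalf: "open (Xhalf c)"
proof (cases c)
  case (real r)
  have "Xhalf c = {0<..<r}" using real by (auto simp: Xhalf_def)
  then show ?thesis by simp
next
  case PInf
  have "Xhalf c = {0<..}" using PInf by (auto simp: Xhalf_def)
  then show ?thesis by simp
next
  case MInf
  have "Xhalf c = {}" using MInf by (auto simp: Xhalf_def)
  then show ?thesis by simp
qed

lemma Xsym_iff: "y \<in> Xsym c \<longleftrightarrow> y \<in> Xhalf c \<or> - y \<in> Xhalf c"
  by (auto simp: Xsym_def Xhalf_def abs_if)

lemma Xsym_eq: "Xsym c = Xhalf c \<union> uminus ` Xhalf c"
proof
  show "Xsym c \<subseteq> Xhalf c \<union> uminus ` Xhalf c"
  proof
    fix y assume "y \<in> Xsym c"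
    then have "y \<in> Xhalf c \<or> - y \<in> Xhalf c" by (simp add: Xsym_iff)
    then show "y \<in> Xhalf c \<union> uminus ` Xhalf c"
    proof
      assume "- y \<in> Xhalf c"
      then have "- (- y) \<in> uminus ` Xhalf c" by (rule imageI)
      then show ?thesis by simp
    qed simp
  qed
  show "Xhalf c \<union> uminus ` Xhalf c \<subseteq> Xsym c"
  proof
    fix y assume "y \<in> Xhalf c \<union> uminus ` Xhalf c"
    then have "y \<in> Xhalf c \<or> - y \<in> Xhalf c" by auto
    then show "y \<in> Xsym c" by (simp add: Xsym_iff)
  qed
qed

lemma open_neg_Xhalf: "open (uminus ` Xhalf c :: real set)"
  using open_negations[OF open_Xhalf] .

lemma open_Xsym: "open (Xsym c)"
  unfolding Xsym_eq using open_Xhalf open_neg_Xhalf by (rule open_Un)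

lemma Xsym_neg: "y \<in> Xsym c \<Longrightarrow> - y \<in> Xsym c"
  by (auto simp: Xsym_def)

lemma open_Xprod: "open (Xprod c :: (real^'n::finite) set)"
proof -
  have "Xprod c = (\<Inter>j\<in>UNIV. (\<lambda>x::real^'n. x $ j) -` Xsym c)" by (auto simp: Xprod_def)
  also have "open \<dots>"
    by (intro open_INT finite_UNIV ballI open_vimage open_Xsym) (auto intro!: continuous_intros)
  finally show ?thesis .
qed

lemma sigma_Xprod: "sigma j x \<in> Xprod c \<longleftrightarrow> x \<in> Xprod c"
proof -
  have "(sigma j x) $ i \<in> Xsym c \<longleftrightarrow> x $ i \<in> Xsym c" for i
    by (cases "i = j") (auto simp: sigma_def Xsym_def)
  then show ?thesis by (simp add: Xprod_def)
qed

lemma sigma_sigma[simp]: "sigma j (sigma j x) = x"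
  by (simp add: sigma_def vec_eq_iff)

lemma sym_ext:
  fixes h :: "real \<Rightarrow> real" and s :: real
  assumes h: "C1_on (Xhalf c) h" and s: "s * s = 1"
    and hs: "\<And>x. x \<in> Xhalf c \<Longrightarrow> h (- x) = s * h x"
  shows "\<And>y. y \<in> Xsym c \<Longrightarrow> (h has_real_derivative deriv h y) (at y)"
    and "\<And>y. y \<in> Xsym c \<Longrightarrow> deriv h (- y) = - s * deriv h y"
    and "\<And>y. y \<in> Xsym c \<Longrightarrow> h (- y) = s * h y"
    and "continuous_on (Xsym c) (deriv h)"
    and "continuous_on (Xsym c) h"
proof -
  have D1: "(h has_real_derivative deriv h y) (at y)" if "y \<in> Xhalf c" for y
  proof -
    have hd: "h differentiable at y" using bspec[OF h[unfolded C1_on_def, THEN conjunct1] that] .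
    from DERIV_deriv_iff_real_differentiable[THEN iffD2, OF hd] show ?thesis .
  qed
  have eqn: "h z = s * h (- z)" if "z \<in> uminus ` Xhalf c" for z
  proof -
    from that obtain x where x: "x \<in> Xhalf c" "z = - x" by (rule imageE)
    have "h (- x) = s * h x" using hs[OF x(1)] .
    then show ?thesis using x(2) by simp
  qed
  have D2: "(h has_real_derivative (- s * deriv h (- y))) (at y)" if "y \<in> uminus ` Xhalf c" for y
  proof -
    have my: "-y \<in> Xhalf c" using that by auto
    have "((\<lambda>z. h (- z)) has_real_derivative (deriv h (- y) * -1)) (at y)"
      using DERIV_chain2[where g=uminus and x=y, OF D1[OF my] DERIV_minus[OF DERIV_ident]] by simp
    then have "((\<lambda>z. s * h (- z)) has_real_derivative s * (deriv h (- y) * -1)) (at y)"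
      by (rule DERIV_cmult)
    then have "((\<lambda>z. s * h (- z)) has_real_derivative (- s * deriv h (- y))) (at y)" by simp
    then show ?thesis
      by (rule has_field_derivative_transform_within_open[OF _ open_neg_Xhalf that]) (rule eqn[symmetric])
  qed
  have dneg: "deriv h y = - s * deriv h (- y)" if "y \<in> uminus ` Xhalf c" for y
    using D2[OF that] by (rule DERIV_imp_deriv)
  show Dall: "(h has_real_derivative deriv h y) (at y)" if "y \<in> Xsym c" for y
  proof -
    from that consider "y \<in> Xhalf c" | "y \<in> uminus ` Xhalf c" unfolding Xsym_eq by blast
    then show ?thesis
    proof cases
      case 1 then show ?thesis by (rule D1)
    next
      case 2 then show ?thesis using D2[OF 2] dneg[OF 2] by simp
    qed
  qed
  show "deriv h (- y) = - s * deriv h y" if "y \<in> Xsym c" for y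
  proof (cases "y \<in> Xhalf c")
    case True
    then have "- y \<in> uminus ` Xhalf c" by auto
    from dneg[OF this] show ?thesis by (simp only: minus_minus)
  next
    case False
    then have "y \<in> uminus ` Xhalf c" using that unfolding Xsym_eq by auto
    then have "deriv h y = - s * deriv h (- y)" by (rule dneg)
    then have "s * deriv h y = - (s * s) * deriv h (- y)" by simp
    then show ?thesis unfolding s by simp
  qed
  show "h (- y) = s * h y" if "y \<in> Xsym c" for y
  proof (cases "y \<in> Xhalf c")
    case True then show ?thesis using hs by simp
  next
    case False
    then have "y \<in> uminus ` Xhalf c" using that unfolding Xsym_eq by auto
    then have "h y = s * h (- y)" by (rule eqn)
    then have "s * h y = (s * s) * h (- y)" by simp
    then show ?thesis unfolding s by simp
  qed
  have c1: "continuous_on (Xhalf c) (deriv h)" using h[unfolded C1_on_def, THEN conjunct2] .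
  have "continuous_on (uminus ` Xhalf c) (\<lambda>y. - s * deriv h (- y))"
    by (intro continuous_intros continuous_on_compose2[OF c1]) auto
  moreover have "\<And>y. y \<in> uminus ` Xhalf c \<Longrightarrow> - s * deriv h (- y) = deriv h y"
    using dneg by metis
  ultimately have c2: "continuous_on (uminus ` Xhalf c) (deriv h)"
    by (rule continuous_on_eq) 
  show "continuous_on (Xsym c) (deriv h)"
    unfolding Xsym_eq by (rule continuous_on_open_Un[OF open_Xhalf open_neg_Xhalf c1 c2])
  show "continuous_on (Xsym c) h"
  proof (rule continuous_at_imp_continuous_on, rule ballI)
    fix y assume "y \<in> Xsym c"
    then show "isCont h y" by (rule DERIV_isCont[OF Dall])
  qed
qed

lemma cut_cont:
  fixes \<phi> :: "'a::topological_space \<Rightarrow> 'b::real_normed_vector"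
  assumes "continuous_on S \<phi>" "open S" "closed K" "K \<subseteq> S" "\<And>x. x \<notin> K \<Longrightarrow> \<phi> x = 0"
  shows "continuous_on UNIV \<phi>"
proof -
  have "continuous_on (- K) \<phi>"
    by (rule continuous_on_cong[THEN iffD1, of _ _ "\<lambda>_. 0"]) (use assms in auto)
  then have "continuous_on (S \<union> - K) \<phi>"
    using assms by (intro continuous_on_open_Un) auto
  moreover have "S \<union> - K = UNIV" using assms by auto
  ultimately show ?thesis by simp
qed


lemma alg:
  fixes P Q A w0 Wr a b u v da du da' du' :: complex
  shows "(w0 * Wr) * ((P * da + Q * ((a + b) / 2) + A * ((a - b) / 2)) * u)
       + (w0 * Wr) * (a * (P * du + Q * ((u + v) / 2) + A * ((u - v) / 2)))
       - (((A + Q) * w0 * Wr) * (a * u) + (P * (w0 * Wr)) * (da * u + a * du))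
       = - ((w0 * Wr) * ((P * da' + (- Q) * ((b + a) / 2) + (- A) * ((b - a) / 2)) * v)
       + (w0 * Wr) * (b * (P * du' + (- Q) * ((v + u) / 2) + (- A) * ((v - u) / 2)))
       - ((((- A) + (- Q)) * w0 * Wr) * (b * v) + (P * (w0 * Wr)) * (da' * v + b * du')))"
  by (simp add: field_simps)


lemma vd_quot:
  fixes \<phi> :: "real \<Rightarrow> 'b::real_normed_vector"
  assumes "(\<phi> has_vector_derivative D) (at 0)"
  shows "((\<lambda>t. (1/t) *\<^sub>R (\<phi> t - \<phi> 0)) \<longlongrightarrow> D) (at 0)"
proof -
  have "((\<lambda>h. norm (\<phi> (0 + h) - \<phi> 0 - h *\<^sub>R D) / norm h) \<longlongrightarrow> 0) (at 0)"
    using assms unfolding has_vector_derivative_def has_derivative_at by blast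
  then have "((\<lambda>h. norm ((1/h) *\<^sub>R (\<phi> h - \<phi> 0) - D)) \<longlongrightarrow> 0) (at 0)"
  proof (rule Lim_transform_eventually)
    show "\<forall>\<^sub>F h in at 0. norm (\<phi> (0 + h) - \<phi> 0 - h *\<^sub>R D) / norm h = norm ((1/h) *\<^sub>R (\<phi> h - \<phi> 0) - D)"
      unfolding eventually_at_filter
    proof (intro always_eventually allI impI)
      fix h :: real assume "h \<noteq> 0"
      have "(1/h) *\<^sub>R (\<phi> h - \<phi> 0) - D = (1/h) *\<^sub>R (\<phi> h - \<phi> 0 - h *\<^sub>R D)"
        using \<open>h \<noteq> 0\<close> by (simp add: scaleR_diff_right)
      then show "norm (\<phi> (0 + h) - \<phi> 0 - h *\<^sub>R D) / norm h = norm ((1/h) *\<^sub>R (\<phi> h - \<phi> 0) - D)"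
        by (simp add: divide_inverse mult.commute)
    qed
  qed
  then show ?thesis
    using Lim_null tendsto_norm_zero_iff by blast
qed

lemma deriv_integral_zero:
  fixes F G :: "'a::euclidean_space \<Rightarrow> 'b::{banach,second_countable_topology}" and e :: 'a
  assumes Fc: "continuous_on UNIV F" and Gc: "continuous_on UNIV G" and K: "compact K"
    and F0: "\<And>x. x \<notin> K \<Longrightarrow> F x = 0" and G0: "\<And>x. x \<notin> K \<Longrightarrow> G x = 0"
    and D: "\<And>x t. ((\<lambda>s. F (x + s *\<^sub>R e)) has_vector_derivative G (x + t *\<^sub>R e)) (at t)"
  shows "integral\<^sup>L lborel G = 0"
proof -
  have Fm[measurable]: "F \<in> borel_measurable borel" using Fc by (rule borel_measurable_continuous_onI)
  have Gm[measurable]: "G \<in> borel_measurable borel" using Gc by (rule borel_measurable_continuous_onI)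
  have "bounded (G ` K)" using K Gc
    by (meson compact_continuous_image compact_imp_bounded continuous_on_subset subset_UNIV)
  then obtain M where M: "\<And>x. x \<in> K \<Longrightarrow> norm (G x) \<le> M" by (auto simp: bounded_iff)
  have Gb: "norm (G x) \<le> max M 0" for x
    using M G0[of x] by (cases "x \<in> K") (auto simp: le_max_iff_disj)
  obtain r where r: "K \<subseteq> cball 0 r" using compact_imp_bounded[OF K] unfolding bounded_iff by (auto simp: subset_iff)
  define R where "R = r + norm e"
  have FI: "integrable lborel F"
  proof -
    have "integrable lborel (\<lambda>x. indicator K x *\<^sub>R F x)"
      using K Fc by (intro borel_integrable_compact) (auto intro: continuous_on_subset)
    also have "(\<lambda>x. indicator K x *\<^sub>R F x) = F" using F0 by (auto simp: indicator_def fun_eq_iff)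
    finally show ?thesis .
  qed
  have shift: "integrable lborel (\<lambda>x. F (x + c)) \<and> integral\<^sup>L lborel (\<lambda>x. F (x + c)) = integral\<^sup>L lborel F" for c
  proof -
    have "integrable (distr lborel borel ((+) c)) F" using FI by (simp add: lborel_distr_plus)
    then have i: "integrable lborel (\<lambda>x. F (c + x))" by (subst (asm) integrable_distr_eq) auto
    have "integral\<^sup>L lborel F = integral\<^sup>L (distr lborel borel ((+) c)) F" by (simp add: lborel_distr_plus)
    also have "\<dots> = integral\<^sup>L lborel (\<lambda>x. F (c + x))" by (rule integral_distr) auto
    finally show ?thesis using i by (simp add: add.commute)
  qed
  define tn where "tn n = 1 / real (Suc n)" for n
  have tn0: "tn n \<noteq> 0" "\<bar>tn n\<bar> \<le> 1" for n by (auto simp: tn_def)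
  have tnlim: "filterlim tn (at 0) sequentially"
  proof -
    have "tn \<longlonglongrightarrow> 0" unfolding tn_def by (rule LIMSEQ_Suc[OF lim_inverse_n']) 
    then have "filterlim tn (at_right 0) sequentially"
      by (intro tendsto_imp_filterlim_at_right) (auto simp: tn_def)
    then show ?thesis by (rule filterlim_mono) (auto simp: at_le)
  qed
  define B where "B = max M 0"
  have B0: "0 \<le> B" by (simp add: B_def)
  have mvt: "norm (F (x + t *\<^sub>R e) - F x) \<le> B * \<bar>t\<bar>" for x t
  proof -
    have "norm ((\<lambda>s. F (x + s *\<^sub>R e)) t - (\<lambda>s. F (x + s *\<^sub>R e)) 0) \<le> B * norm (t - 0)"
    proof (rule differentiable_bound[where S=UNIV and f'="\<lambda>s h. h *\<^sub>R G (x + s *\<^sub>R e)"])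
      fix s :: real
      show "((\<lambda>s. F (x + s *\<^sub>R e)) has_derivative (\<lambda>h. h *\<^sub>R G (x + s *\<^sub>R e))) (at s within UNIV)"
        using D[of x s] by (simp add: has_vector_derivative_def)
      have "onorm (\<lambda>h::real. h *\<^sub>R G (x + s *\<^sub>R e)) = onorm (\<lambda>h::real. h) * norm (G (x + s *\<^sub>R e))"
        by (rule onorm_scaleR_left) (rule bounded_linear_ident)
      also have "\<dots> = norm (G (x + s *\<^sub>R e))" using onorm_id[where 'a=real] by (simp add: id_def)
      also have "\<dots> \<le> B" using Gb unfolding B_def .
      finally show "onorm (\<lambda>h::real. h *\<^sub>R G (x + s *\<^sub>R e)) \<le> B" .
    qed auto
    then show ?thesis by simp
  qed
  define qn where "qn n x = (1 / tn n) *\<^sub>R (F (x + tn n *\<^sub>R e) - F x)" for n x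
  have qbound: "norm (qn n x) \<le> B * indicator (cball 0 R) x" for n x
  proof (cases "x \<in> cball 0 R")
    case True
    have "norm (qn n x) = norm (F (x + tn n *\<^sub>R e) - F x) / \<bar>tn n\<bar>"
      by (simp add: qn_def divide_inverse mult.commute)
    also have "\<dots> \<le> B * \<bar>tn n\<bar> / \<bar>tn n\<bar>"
      using mvt tn0[of n] by (intro divide_right_mono) auto
    also have "\<dots> = B" using tn0[of n] by simp
    finally show ?thesis using True by simp
  next
    case False
    then have nx: "norm x > R" by simp
    have "x \<notin> K" using nx r unfolding R_def by (auto simp: subset_iff) (smt (verit) norm_ge_zero)
    moreover have "x + tn n *\<^sub>R e \<notin> K"
    proof
      assume "x + tn n *\<^sub>R e \<in> K"
      then have "norm (x + tn n *\<^sub>R e) \<le> r" using r by auto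
      moreover have "norm (tn n *\<^sub>R e) \<le> norm e" using tn0[of n]
        by (simp add: mult_left_le_one_le)
      moreover have "norm x \<le> norm (x + tn n *\<^sub>R e) + norm (tn n *\<^sub>R e)"
        by (metis add_diff_cancel norm_triangle_ineq4)
      ultimately show False using nx unfolding R_def by linarith
    qed
    ultimately show ?thesis using False F0 by (simp add: qn_def)
  qed
  have qint: "integral\<^sup>L lborel (qn n) = 0" for n
  proof -
    have "integral\<^sup>L lborel (qn n) = (1 / tn n) *\<^sub>R (integral\<^sup>L lborel (\<lambda>x. F (x + tn n *\<^sub>R e)) - integral\<^sup>L lborel F)"
      unfolding qn_def using shift FI by (simp add: integral_diff)
    then show ?thesis using shift by simp
  qed
  have qlim: "(\<lambda>n. qn n x) \<longlonglongrightarrow> G x" for x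
  proof -
    have "((\<lambda>s. F (x + s *\<^sub>R e)) has_vector_derivative G x) (at 0)" using D[of x 0] by simp
    from vd_quot[OF this] have "((\<lambda>t. (1/t) *\<^sub>R (F (x + t *\<^sub>R e) - F x)) \<longlongrightarrow> G x) (at 0)" by simp
    from filterlim_compose[OF this tnlim] show ?thesis unfolding qn_def by (simp add: o_def)
  qed
  have "(\<lambda>n. integral\<^sup>L lborel (qn n)) \<longlonglongrightarrow> integral\<^sup>L lborel G"
  proof (rule integral_dominated_convergence[where w="\<lambda>x. B * indicator (cball 0 R) x"])
    show "integrable lborel (\<lambda>x. B * indicator (cball 0 R) x)"
      using emeasure_lborel_cball_finite by (intro integrable_mult_right integrable_real_indicator) auto
    show "\<And>i. qn i \<in> borel_measurable lborel" unfolding qn_def[abs_def] by measurable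
  qed (use qlim qbound in \<open>auto\<close>)
  then show ?thesis using qint by (simp add: LIMSEQ_const_iff)
qed



lemma sigma_T:
  fixes x :: "real^'n::finite"
  shows "sigma j x = (\<Sum>b\<in>Basis. ((if b = axis j 1 then -1 else 1) * (x \<bullet> b)) *\<^sub>R b)" (is "_ = ?T")
proof (rule euclidean_eqI)
  fix b :: "real^'n" assume b: "b \<in> Basis"
  then obtain i where i: "b = axis i 1" by (auto simp: Basis_vec_def)
  have "?T \<bullet> b = (\<Sum>b'\<in>Basis. ((if b' = axis j 1 then -1 else 1) * (x \<bullet> b')) * (b' \<bullet> b))"
    by (simp add: inner_sum_left)
  also have "\<dots> = (if b = axis j 1 then -1 else 1) * (x \<bullet> b)"
    using b by (simp add: inner_Basis if_distrib[of "\<lambda>z. _ * z"] cong: if_cong)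
  also have "\<dots> = sigma j x \<bullet> b"
    using i by (auto simp: sigma_def inner_axis axis_eq_axis)
  finally show "sigma j x \<bullet> b = ?T \<bullet> b" ..
qed

lemma lborel_sigma: "distr lborel borel (sigma j) = (lborel :: (real^'n::finite) measure)"
proof -
  have "(lborel :: (real^'n) measure) = density (distr lborel borel (\<lambda>x. 0 + (\<Sum>b\<in>Basis. ((if b = axis j 1 then -1 else 1) * (x \<bullet> b)) *\<^sub>R b)))
      (\<lambda>_. ennreal (\<Prod>b\<in>Basis. \<bar>if b = axis j (1::real) then -1 else 1\<bar>))"
    by (rule lborel_affine_euclidean) auto
  also have "(\<lambda>x::real^'n. 0 + (\<Sum>b\<in>Basis. ((if b = axis j 1 then -1 else 1) * (x \<bullet> b)) *\<^sub>R b)) = sigma j"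
    by (simp add: sigma_T fun_eq_iff)
  also have "(\<Prod>b\<in>(Basis::(real^'n) set). \<bar>if b = axis j (1::real) then -1 else 1\<bar>) = (1::real)"
    by (intro prod.neutral) auto
  finally show ?thesis by (simp add: density_1)
qed

lemma sigma_measurable[measurable]: "sigma j \<in> borel_measurable (borel :: (real^'n::finite) measure)"
proof -
  have "continuous_on UNIV (sigma j :: real^'n \<Rightarrow> _)"
    unfolding sigma_def
    apply (intro continuous_on_vec_lambda)
    subgoal for i by (cases "i = j") (auto intro!: continuous_intros)
    done
  then show ?thesis by (rule borel_measurable_continuous_onI)
qed

lemma integral_sigma:
  fixes h :: "real^'n::finite \<Rightarrow> complex"
  assumes [measurable]: "h \<in> borel_measurable borel"
  shows "integral\<^sup>L lborel (\<lambda>x. h (sigma j x)) = integral\<^sup>L lborel h"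
proof -
  have "integral\<^sup>L lborel h = integral\<^sup>L (distr lborel borel (sigma j)) h" by (simp add: lborel_sigma)
  also have "\<dots> = integral\<^sup>L lborel (\<lambda>x. h (sigma j x))" by (rule integral_distr) auto
  finally show ?thesis ..
qed




theorem mainTheorem1:
  fixes c :: ereal
    and w p q :: "'n::finite \<Rightarrow> real \<Rightarrow> real"
    and j :: 'n
    and f g :: "real ^ 'n \<Rightarrow> complex"
  assumes c_pos: "0 < c"
    and w_C2: "\<And>i. C2_on (Xhalf c) (w i)"
    and w_pos: "\<And>i x. x \<in> Xhalf c \<Longrightarrow> 0 < w i x"
    and p_C2: "\<And>i. C2_on (Xhalf c) (p i)"
    and p_nz: "\<And>i x. x \<in> Xhalf c \<Longrightarrow> p i x \<noteq> 0"
    and q_C1: "\<And>i. C1_on (Xhalf c) (q i)"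
    and w_even: "\<And>i x. x \<in> Xhalf c \<Longrightarrow> w i (- x) = w i x"
    and p_even: "\<And>i x. x \<in> Xhalf c \<Longrightarrow> p i (- x) = p i x"
    and q_odd: "\<And>i x. x \<in> Xhalf c \<Longrightarrow> q i (- x) = - q i x"
    and f_C1c: "C1c (Xprod c) f"
    and g_C1c: "C1c (Xprod c) g"
  shows "inner_mu c w (Dop w p q j f) g = - inner_mu c w f (Dop w p q j g)"
proof -
  define S where "S = (Xprod c :: (real^'n) set)"
  have oS: "open S" unfolding S_def by (rule open_Xprod)
  have SX: "x $ i \<in> Xsym c" if "x \<in> S" for x i using that unfolding S_def Xprod_def by blast
  have sS: "sigma j x \<in> S \<longleftrightarrow> x \<in> S" for x unfolding S_def by (rule sigma_Xprod)
  define Kf where "Kf = closure {x. f x \<noteq> 0}"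
  define Kg where "Kg = closure {x. g x \<noteq> 0}"
  have Kf: "compact Kf" "Kf \<subseteq> S" using f_C1c unfolding C1c_def Kf_def S_def by auto
  have Kg: "compact Kg" "Kg \<subseteq> S" using g_C1c unfolding C1c_def Kg_def S_def by auto
  have f0: "f x = 0" if "x \<notin> Kf" for x
  proof (rule ccontr)
    assume "f x \<noteq> 0"
    then have "x \<in> {x. f x \<noteq> 0}" by simp
    then have "x \<in> Kf" unfolding Kf_def by (rule subsetD[OF closure_subset])
    with that show False by simp
  qed
  have g0: "g x = 0" if "x \<notin> Kg" for x
  proof (rule ccontr)
    assume "g x \<noteq> 0"
    then have "x \<in> {x. g x \<noteq> 0}" by simp
    then have "x \<in> Kg" unfolding Kg_def by (rule subsetD[OF closure_subset])
    with that show False by simp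
  qed
  define K where "K = Kf \<union> Kg"
  have K: "compact K" "K \<subseteq> S" "closed K" using Kf Kg unfolding K_def by (auto intro: compact_imp_closed)
  have fK: "f x = 0" "g x = 0" if "x \<notin> K" for x using that f0 g0 unfolding K_def by auto
  obtain f' where f': "\<And>x. x \<in> S \<Longrightarrow> (f has_derivative blinfun_apply (f' x)) (at x)" "continuous_on S f'"
    using f_C1c unfolding C1c_def C1_multi_def S_def by blast
  obtain g' where g': "\<And>x. x \<in> S \<Longrightarrow> (g has_derivative blinfun_apply (g' x)) (at x)" "continuous_on S g'"
    using g_C1c unfolding C1c_def C1_multi_def S_def by blast
  define e :: "real^'n" where "e = axis j 1"
  have gen: "continuous_on S h \<and> continuous_on S (partial j h) \<and>
     (\<forall>x t. x + t *\<^sub>R e \<in> S \<longrightarrow> ((\<lambda>s. h (x + s *\<^sub>R e)) has_vector_derivative partial j h (x + t *\<^sub>R e)) (at t))"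
    if hd: "\<And>x. x \<in> S \<Longrightarrow> (h has_derivative blinfun_apply (h' x)) (at x)" and hc: "continuous_on S h'"
    for h :: "real^'n \<Rightarrow> complex" and h'
  proof (intro conjI allI impI)
    have pe: "partial j h x = blinfun_apply (h' x) e" if "x \<in> S" for x
      unfolding partial_def e_def using frechet_derivative_at[OF hd[OF that]] by simp
    show "continuous_on S h"
    proof (rule continuous_at_imp_continuous_on, rule ballI)
      fix x assume "x \<in> S"
      from has_derivative_continuous[OF hd[OF this]] show "isCont h x" .
    qed
    have "continuous_on S (\<lambda>x. blinfun_apply (h' x) e)"
      by (rule blinfun.continuous_on[OF hc continuous_on_const])
    then show "continuous_on S (partial j h)" by (rule continuous_on_eq) (simp add: pe)
    fix x t assume xt: "x + t *\<^sub>R e \<in> S"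
    have d1: "((\<lambda>s. x + s *\<^sub>R e) has_derivative (\<lambda>u. u *\<^sub>R e)) (at t)"
      by (auto intro!: derivative_eq_intros)
    have "((\<lambda>s. h (x + s *\<^sub>R e)) has_derivative (\<lambda>u. blinfun_apply (h' (x + t *\<^sub>R e)) (u *\<^sub>R e))) (at t)"
      by (rule has_derivative_compose[OF d1 hd[OF xt]])
    then show "((\<lambda>s. h (x + s *\<^sub>R e)) has_vector_derivative partial j h (x + t *\<^sub>R e)) (at t)"
      unfolding has_vector_derivative_def pe[OF xt] by (simp add: blinfun.scaleR_right)
  qed
  note fgen = gen[OF f'] and ggen = gen[OF g']
  have wC: "C1_on (Xhalf c) (w i)" for i using w_C2[of i] unfolding C2_on_def by (rule conjunct1)
  have pC: "C1_on (Xhalf c) (p i)" for i using p_C2[of i] unfolding C2_on_def by (rule conjunct1)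
  have wE: "w i (- x) = 1 * w i x" if "x \<in> Xhalf c" for i x using w_even[OF that] by simp
  have pE: "p i (- x) = 1 * p i x" if "x \<in> Xhalf c" for i x using p_even[OF that] by simp
  have qE: "q i (- x) = -1 * q i x" if "x \<in> Xhalf c" for i x using q_odd[OF that] by simp
  have one: "(1::real) * 1 = 1" "(-1::real) * -1 = 1" by simp_all
  have w_der: "(w i has_real_derivative deriv (w i) y) (at y)" if "y \<in> Xsym c" for i y
    by (rule sym_ext(1)[OF wC one(1) wE that])
  have w_dneg: "deriv (w i) (- y) = - deriv (w i) y" if "y \<in> Xsym c" for i y
    using sym_ext(2)[OF wC one(1) wE that] by simp
  have w_neg: "w i (- y) = w i y" if "y \<in> Xsym c" for i y
    using sym_ext(3)[OF wC one(1) wE that] by simp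
  have w_dc: "continuous_on (Xsym c) (deriv (w i))" for i by (rule sym_ext(4)[OF wC one(1) wE])
  have w_c: "continuous_on (Xsym c) (w i)" for i by (rule sym_ext(5)[OF wC one(1) wE])
  have p_der: "(p i has_real_derivative deriv (p i) y) (at y)" if "y \<in> Xsym c" for i y
    by (rule sym_ext(1)[OF pC one(1) pE that])
  have p_dneg: "deriv (p i) (- y) = - deriv (p i) y" if "y \<in> Xsym c" for i y
    using sym_ext(2)[OF pC one(1) pE that] by simp
  have p_neg: "p i (- y) = p i y" if "y \<in> Xsym c" for i y
    using sym_ext(3)[OF pC one(1) pE that] by simp
  have p_dc: "continuous_on (Xsym c) (deriv (p i))" for i by (rule sym_ext(4)[OF pC one(1) pE])
  have p_c: "continuous_on (Xsym c) (p i)" for i by (rule sym_ext(5)[OF pC one(1) pE])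
  have q_neg: "q i (- y) = - q i y" if "y \<in> Xsym c" for i y
    using sym_ext(3)[OF q_C1 one(2) qE that] by simp
  have q_c: "continuous_on (Xsym c) (q i)" for i by (rule sym_ext(5)[OF q_C1 one(2) qE])
  have w_gt: "0 < w i y" if "y \<in> Xsym c" for i y
  proof (cases "y \<in> Xhalf c")
    case True then show ?thesis by (rule w_pos)
  next
    case False
    then have "- y \<in> Xhalf c" using that by (simp add: Xsym_iff)
    then have "0 < w i (- y)" by (rule w_pos)
    then show ?thesis using w_neg[OF that] by simp
  qed
  have lift: "continuous_on S (\<lambda>x. \<phi> (x $ i))" if "continuous_on (Xsym c) \<phi>" for \<phi> :: "real \<Rightarrow> real" and i
  proof (rule continuous_on_compose2[OF that])
    show "continuous_on S (\<lambda>x. x $ i)" by (intro continuous_intros)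
    show "(\<lambda>x. x $ i) ` S \<subseteq> Xsym c" using SX by auto
  qed
  define W where "W x = (\<Prod>i\<in>UNIV. w i (x $ i))" for x :: "real^'n"
  define Wr where "Wr x = (\<Prod>i\<in>UNIV - {j}. w i (x $ i))" for x :: "real^'n"
  have W_split: "W x = w j (x $ j) * Wr x" for x
    unfolding W_def Wr_def by (rule prod.remove) auto
  have ej: "(x + t *\<^sub>R e) $ j = x $ j + t" for x t by (simp add: e_def)
  have ei: "(x + t *\<^sub>R e) $ i = x $ i" if "i \<noteq> j" for x t i using that by (simp add: e_def axis_def)
  have ej': "e $ j = 1" by (simp add: e_def)
  have Wr_e: "Wr (x + t *\<^sub>R e) = Wr x" for x t
    unfolding Wr_def by (rule prod.cong) (auto simp: e_def axis_def)
  have sj: "sigma j x $ j = - (x $ j)" for x by (simp add: sigma_def)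
  have si: "sigma j x $ i = x $ i" if "i \<noteq> j" for x i using that by (simp add: sigma_def)
  have Wr_s: "Wr (sigma j x) = Wr x" for x
    unfolding Wr_def by (rule prod.cong) (auto simp: si)
  have W_c: "continuous_on S W" unfolding W_def by (intro continuous_on_prod lift w_c)
  have W_gt: "0 < W x" if "x \<in> S" for x unfolding W_def by (intro prod_pos ballI w_gt SX that)
  have Wr_gt: "0 < Wr x" if "x \<in> S" for x unfolding Wr_def by (intro prod_pos ballI w_gt SX that)
  have W_s: "W (sigma j x) = W x" if "x \<in> S" for x
    unfolding W_split Wr_s sj using w_neg[OF SX[OF that]] by simp
  have sig_c: "continuous_on S (\<lambda>x. h (sigma j x))" if "continuous_on S h" for h :: "real^'n \<Rightarrow> complex"
  proof (rule continuous_on_compose2[OF that])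
    show "continuous_on S (sigma j)" unfolding sigma_def
      apply (intro continuous_on_vec_lambda)
      subgoal for i by (cases "i = j") (auto intro!: continuous_intros)
      done
    show "sigma j ` S \<subseteq> S" using sS by auto
  qed
  have Dc: "continuous_on S (Dop w p q j h)" if "continuous_on S h" "continuous_on S (partial j h)"
    for h :: "real^'n \<Rightarrow> complex"
    unfolding Dop_def
    by (intro continuous_intros that sig_c lift w_c w_dc p_c p_dc q_c)
       (auto dest!: SX[of _ j] w_gt[of _ j])
  have fc: "continuous_on S f" and fpc: "continuous_on S (partial j f)" using fgen by blast+
  have gc: "continuous_on S g" and gpc: "continuous_on S (partial j g)" using ggen by blast+
  have Dfc: "continuous_on S (Dop w p q j f)" by (rule Dc[OF fc fpc])
  have Dgc: "continuous_on S (Dop w p q j g)" by (rule Dc[OF gc gpc])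
  have contK: "continuous_on UNIV \<phi>" if "continuous_on S \<phi>" "\<And>x. x \<notin> K \<Longrightarrow> \<phi> x = 0"
    for \<phi> :: "real^'n \<Rightarrow> complex"
    by (rule cut_cont[OF that(1) oS K(3) K(2) that(2)])
  have intK: "integrable lborel \<phi>" if "continuous_on UNIV \<phi>" "\<And>x. x \<notin> K \<Longrightarrow> \<phi> x = 0"
    for \<phi> :: "real^'n \<Rightarrow> complex"
  proof -
    have "integrable lborel (\<lambda>x. indicator K x *\<^sub>R \<phi> x)"
      by (rule borel_integrable_compact[OF K(1)]) (rule continuous_on_subset[OF that(1)], simp)
    also have "(\<lambda>x. indicator K x *\<^sub>R \<phi> x) = \<phi>" using that(2) by (auto simp: indicator_def fun_eq_iff)
    finally show ?thesis .
  qed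
  define V where "V x = (if x \<in> S then W x else 0)" for x
  have V_nn: "0 \<le> V x" for x using W_gt by (auto simp: V_def less_imp_le)
  have V_m: "V \<in> borel_measurable borel"
  proof -
    have "(\<lambda>x. indicator S x *\<^sub>R W x) \<in> borel_measurable borel"
      by (rule borel_measurable_continuous_on_indicator[OF _ W_c]) (simp add: oS)
    also have "(\<lambda>x. indicator S x *\<^sub>R W x) = V" by (auto simp: V_def fun_eq_iff indicator_def)
    finally show ?thesis .
  qed
  have mu_eq: "mu c w = density lborel (\<lambda>x. ennreal (V x))"
    unfolding mu_def
    by (rule arg_cong[where f="density lborel"]) (auto simp: V_def W_def S_def fun_eq_iff indicator_def)
  define I1 where "I1 x = V x *\<^sub>R (Dop w p q j f x * cnj (g x))" for x
  define I2 where "I2 x = V x *\<^sub>R (f x * cnj (Dop w p q j g x))" for x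
  have J1c: "continuous_on UNIV (\<lambda>x. Dop w p q j f x * cnj (g x))"
    by (rule contK) (auto intro!: continuous_intros Dfc gc simp: fK)
  have J2c: "continuous_on UNIV (\<lambda>x. f x * cnj (Dop w p q j g x))"
    by (rule contK) (auto intro!: continuous_intros Dgc fc simp: fK)
  have inner1: "inner_mu c w (Dop w p q j f) g = integral\<^sup>L lborel I1"
    unfolding inner_mu_def mu_eq I1_def
    by (rule integral_density) (auto intro: borel_measurable_continuous_onI[OF J1c] V_m V_nn)
  have inner2: "inner_mu c w f (Dop w p q j g) = integral\<^sup>L lborel I2"
    unfolding inner_mu_def mu_eq I2_def
    by (rule integral_density) (auto intro: borel_measurable_continuous_onI[OF J2c] V_m V_nn)
  have I1c: "continuous_on UNIV I1"
  proof (rule contK)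
    have "continuous_on S (\<lambda>x. W x *\<^sub>R (Dop w p q j f x * cnj (g x)))"
      by (intro continuous_intros W_c Dfc gc)
    then show "continuous_on S I1" by (rule continuous_on_eq) (simp add: I1_def V_def)
  qed (simp add: I1_def fK)
  have I2c: "continuous_on UNIV I2"
  proof (rule contK)
    have "continuous_on S (\<lambda>x. W x *\<^sub>R (f x * cnj (Dop w p q j g x)))"
      by (intro continuous_intros W_c Dgc fc)
    then show "continuous_on S I2" by (rule continuous_on_eq) (simp add: I2_def V_def)
  qed (simp add: I2_def fK)
  have I1i: "integrable lborel I1" by (rule intK[OF I1c]) (simp add: I1_def fK)
  have I2i: "integrable lborel I2" by (rule intK[OF I2c]) (simp add: I2_def fK)
  define A where "A x = p j (x $ j) * deriv (w j) (x $ j) / w j (x $ j) + deriv (p j) (x $ j) - q j (x $ j)" for x :: "real^'n"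
  define F where "F x = (if x \<in> S then complex_of_real (p j (x $ j) * W x) * (f x * cnj (g x)) else 0)" for x
  define G where "G x = (if x \<in> S then complex_of_real ((A x + q j (x $ j)) * w j (x $ j) * Wr x) * (f x * cnj (g x))
      + complex_of_real (p j (x $ j) * W x) * (partial j f x * cnj (g x) + f x * cnj (partial j g x)) else 0)" for x
  have F0: "F x = 0" if "x \<notin> K" for x using fK[OF that] by (simp add: F_def)
  have G0: "G x = 0" if "x \<notin> K" for x using fK[OF that] by (simp add: G_def)
  have Wr_c: "continuous_on S Wr" unfolding Wr_def by (intro continuous_on_prod lift w_c)
  have A_c: "continuous_on S A" unfolding A_def
    by (intro continuous_intros lift w_c w_dc p_c p_dc q_c) (auto dest!: SX[of _ j] w_gt[of _ j])
  have Fc: "continuous_on UNIV F"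
  proof (rule contK)
    have "continuous_on S (\<lambda>x. complex_of_real (p j (x $ j) * W x) * (f x * cnj (g x)))"
      by (intro continuous_intros lift p_c W_c fc gc)
    then show "continuous_on S F" by (rule continuous_on_eq) (simp add: F_def)
  qed (rule F0)
  have Gc: "continuous_on UNIV G"
  proof (rule contK)
    have "continuous_on S (\<lambda>x. complex_of_real ((A x + q j (x $ j)) * w j (x $ j) * Wr x) * (f x * cnj (g x))
      + complex_of_real (p j (x $ j) * W x) * (partial j f x * cnj (g x) + f x * cnj (partial j g x)))"
      by (intro continuous_intros lift p_c W_c fc gc A_c q_c w_c Wr_c fpc gpc)
    then show "continuous_on S G" by (rule continuous_on_eq) (simp add: G_def)
  qed (rule G0)
  have Dder: "((\<lambda>s. F (x + s *\<^sub>R e)) has_vector_derivative G (x + t *\<^sub>R e)) (at t)" for x t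
  proof (cases "x + t *\<^sub>R e \<in> S")
    case True
    define y where "y = x + t *\<^sub>R e"
    have yS: "y \<in> S" using True by (simp add: y_def)
    have yj: "x $ j + t \<in> Xsym c" using SX[OF yS, of j] by (simp add: y_def ej ej')
    define U where "U = (\<lambda>s. x + s *\<^sub>R e) -` S"
    have oU: "open U" unfolding U_def by (rule open_vimage[OF oS]) (intro continuous_intros)
    have tU: "t \<in> U" using True by (simp add: U_def)
    have dp: "((\<lambda>s. p j (x $ j + s)) has_real_derivative deriv (p j) (x $ j + t)) (at t)"
      using DERIV_shift[of "p j" "deriv (p j) (x $ j + t)" t "x $ j"] p_der[OF yj] by (simp add: add.commute)
    have dw: "((\<lambda>s. w j (x $ j + s)) has_real_derivative deriv (w j) (x $ j + t)) (at t)"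
      using DERIV_shift[of "w j" "deriv (w j) (x $ j + t)" t "x $ j"] w_der[OF yj] by (simp add: add.commute)
    define \<rho> where "\<rho> s = p j (x $ j + s) * w j (x $ j + s) * Wr x" for s
    define \<rho>' where "\<rho>' = p j (x $ j + t) * w j (x $ j + t) * 0 + (p j (x $ j + t) * deriv (w j) (x $ j + t) + deriv (p j) (x $ j + t) * w j (x $ j + t)) * Wr x"
    have drho: "(\<rho> has_real_derivative \<rho>') (at t)"
      unfolding \<rho>_def[abs_def] \<rho>'_def by (intro DERIV_mult' dp dw DERIV_const)
    have df: "((\<lambda>s. f (x + s *\<^sub>R e)) has_vector_derivative partial j f y) (at t)"
      using fgen True unfolding y_def by blast
    have dg: "((\<lambda>s. g (x + s *\<^sub>R e)) has_vector_derivative partial j g y) (at t)"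
      using ggen True unfolding y_def by blast
    have dcg: "((\<lambda>s. cnj (g (x + s *\<^sub>R e))) has_vector_derivative cnj (partial j g y)) (at t)"
      by (rule bounded_linear.has_vector_derivative[OF bounded_linear_cnj dg])
    have dall: "((\<lambda>s. complex_of_real (\<rho> s) * (f (x + s *\<^sub>R e) * cnj (g (x + s *\<^sub>R e)))) has_vector_derivative
        (complex_of_real (\<rho> t) * (f (x + t *\<^sub>R e) * cnj (partial j g y) + partial j f y * cnj (g (x + t *\<^sub>R e)))
         + complex_of_real \<rho>' * (f (x + t *\<^sub>R e) * cnj (g (x + t *\<^sub>R e))))) (at t)"
      by (intro has_vector_derivative_mult has_vector_derivative_of_real drho df dcg)
    have wne: "w j (x $ j + t) \<noteq> 0" using w_gt[of _ j, OF yj] by simp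
    have r1: "\<rho>' = (A y + q j (y $ j)) * w j (y $ j) * Wr y"
      using wne unfolding \<rho>'_def A_def by (simp add: y_def ej ej' Wr_e field_simps)
    have r2: "\<rho> t = p j (y $ j) * W y"
      unfolding \<rho>_def by (simp add: y_def ej ej' Wr_e W_split)
    have "G y = complex_of_real (\<rho> t) * (f (x + t *\<^sub>R e) * cnj (partial j g y) + partial j f y * cnj (g (x + t *\<^sub>R e)))
         + complex_of_real \<rho>' * (f (x + t *\<^sub>R e) * cnj (g (x + t *\<^sub>R e)))"
      unfolding G_def r1 r2 using yS by (simp add: y_def algebra_simps)
    with dall have dall': "((\<lambda>s. complex_of_real (\<rho> s) * (f (x + s *\<^sub>R e) * cnj (g (x + s *\<^sub>R e)))) has_vector_derivative G y) (at t)"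
      by simp
    show ?thesis unfolding y_def[symmetric]
    proof (rule has_vector_derivative_transform_within_open[OF dall' oU tU])
      fix s assume "s \<in> U"
      then have sS: "x + s *\<^sub>R e \<in> S" by (simp add: U_def)
      show "complex_of_real (\<rho> s) * (f (x + s *\<^sub>R e) * cnj (g (x + s *\<^sub>R e))) = F (x + s *\<^sub>R e)"
        unfolding F_def \<rho>_def using sS by (simp add: ej ej' Wr_e W_split mult.assoc)
    qed
  next
    case False
    then have nK: "x + t *\<^sub>R e \<notin> K" using K(2) by blast
    define U where "U = (\<lambda>s. x + s *\<^sub>R e) -` (- K)"
    have oU: "open U" unfolding U_def by (rule open_vimage) (use K(3) in \<open>auto intro!: continuous_intros\<close>)
    have tU: "t \<in> U" using nK by (simp add: U_def)
    have "G (x + t *\<^sub>R e) = 0" using False by (simp add: G_def)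
    then have d0: "((\<lambda>s. 0) has_vector_derivative G (x + t *\<^sub>R e)) (at t)" by simp
    show ?thesis
    proof (rule has_vector_derivative_transform_within_open[OF d0 oU tU])
      fix s assume "s \<in> U"
      then show "0 = F (x + s *\<^sub>R e)" using F0 by (simp add: U_def)
    qed
  qed
  have intG: "integral\<^sup>L lborel G = 0"
    by (rule deriv_integral_zero[OF Fc Gc K(1) F0 G0 Dder])
  define H where "H x = I1 x + I2 x - G x" for x
  have Hc: "continuous_on UNIV H" unfolding H_def by (intro continuous_intros I1c I2c Gc)
  have Hm: "H \<in> borel_measurable borel" by (rule borel_measurable_continuous_onI[OF Hc])
  have Gi: "integrable lborel G" by (rule intK[OF Gc G0])
  have Hi: "integrable lborel H" unfolding H_def using I1i I2i Gi by auto
  have Hform: "H z = (complex_of_real (w j (z$j)) * complex_of_real (Wr z)) * ((complex_of_real (p j (z$j)) * partial j f z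
        + complex_of_real (q j (z$j)) * ((f z + f (sigma j z)) / 2) + complex_of_real (A z) * ((f z - f (sigma j z)) / 2)) * cnj (g z))
      + (complex_of_real (w j (z$j)) * complex_of_real (Wr z)) * (f z * (complex_of_real (p j (z$j)) * cnj (partial j g z)
        + complex_of_real (q j (z$j)) * ((cnj (g z) + cnj (g (sigma j z))) / 2) + complex_of_real (A z) * ((cnj (g z) - cnj (g (sigma j z))) / 2)))
      - (((complex_of_real (A z) + complex_of_real (q j (z$j))) * complex_of_real (w j (z$j)) * complex_of_real (Wr z)) * (f z * cnj (g z))
        + (complex_of_real (p j (z$j)) * (complex_of_real (w j (z$j)) * complex_of_real (Wr z))) * (partial j f z * cnj (g z) + f z * cnj (partial j g z)))"
    if zS: "z \<in> S" for z
    unfolding H_def I1_def I2_def G_def V_def Dop_def A_def[symmetric]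
    using zS by (simp add: scaleR_conv_of_real W_split)
  have Hsym: "H x = - H (sigma j x)" for x
  proof (cases "x \<in> S")
    case False
    then have "sigma j x \<notin> S" using sS by simp
    then show ?thesis using False by (simp add: H_def I1_def I2_def G_def V_def)
  next
    case True
    have sxS: "sigma j x \<in> S" using True sS by simp
    have xj: "x $ j \<in> Xsym c" by (rule SX[OF True])
    have As: "A (sigma j x) = - A x"
      unfolding A_def sj using w_neg[OF xj] w_dneg[OF xj] p_neg[OF xj] p_dneg[OF xj] q_neg[OF xj]
      by (simp add: field_simps)
    show ?thesis
      unfolding Hform[OF True] Hform[OF sxS] sj sigma_sigma Wr_s As w_neg[OF xj] p_neg[OF xj] q_neg[OF xj] of_real_minus
      by (rule alg)
  qed
  have intH: "integral\<^sup>L lborel H = 0"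
  proof -
    have "integral\<^sup>L lborel H = integral\<^sup>L lborel (\<lambda>x. H (sigma j x))" by (rule integral_sigma[OF Hm, symmetric])
    also have "\<dots> = integral\<^sup>L lborel (\<lambda>x. - H x)"
      by (rule arg_cong[where f="integral\<^sup>L lborel"]) (simp add: fun_eq_iff Hsym[of "sigma j _"])
    also have "\<dots> = - integral\<^sup>L lborel H" by (rule integral_minus)
    finally show ?thesis by simp
  qed
  have "integral\<^sup>L lborel I1 + integral\<^sup>L lborel I2 = integral\<^sup>L lborel (\<lambda>x. I1 x + I2 x)"
    using I1i I2i by simp
  also have "(\<lambda>x. I1 x + I2 x) = (\<lambda>x. G x + H x)" by (simp add: H_def fun_eq_iff)
  also have "integral\<^sup>L lborel (\<lambda>x. G x + H x) = integral\<^sup>L lborel G + integral\<^sup>L lborel H"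
    using Gi Hi by simp
  finally have "integral\<^sup>L lborel I1 + integral\<^sup>L lborel I2 = 0" using intG intH by simp
  then show ?thesis unfolding inner1 inner2 by (simp add: eq_neg_iff_add_eq_0)
qed

end
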